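(* Let $r\ge 0$ be fixed. There is a constant $C>0$ depending only on $r$ such that for every $n$ and every hypergraph $H\in\mathcal K_r(n)$, there exists a hypergraph $H'$ on $[n]$ with at most $C n^{r+1}$ hyperedges (i.e. $\mathcal O(n^{r+1})$) such that $H=\mathrm{cl}_r(H')$.
   Context: Hypergraphs on $V=[n]$ are identified with their hyperedge sets. $\mathcal K_r(n)$ is the class of hypergraphs $\mathcal E$ on $V$ satisfying: (R0) every $X\subseteq V$ with $|X|\le r$ is in $\mathcal E$; (R1) $A\in\mathcal E\Rightarrow V\setminus A\in\mathcal E$; (R2) $A,B\in\mathcal E$ and $|A\cap B|\ge r\Rightarrow A\cup B\in\mathcal E$. For a hypergraph $H$ on $V$, $\mathrm{cl}_r(H)$ is the intersection of all hypergraphs in $\mathcal K_r(n)$ containing $H$. *)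

theory Defs
  imports Complex_Main
begin

definition vset :: "nat \<Rightarrow> nat set" where
  "vset n = {1..n}"

definition is_hypergraph :: "nat \<Rightarrow> nat set set \<Rightarrow> bool" where
  "is_hypergraph n E \<longleftrightarrow> (\<forall>A\<in>E. A \<subseteq> vset n)"

definition K_class :: "nat \<Rightarrow> nat \<Rightarrow> nat set set set" where
  "K_class r n = {E. is_hypergraph n E
      \<and> (\<forall>X. X \<subseteq> vset n \<and> card X \<le> r \<longrightarrow> X \<in> E)
      \<and> (\<forall>A\<in>E. vset n - A \<in> E)
      \<and> (\<forall>A\<in>E. \<forall>B\<in>E. card (A \<inter> B) \<ge> r \<longrightarrow> A \<union> B \<in> E)}"

definition cl :: "nat \<Rightarrow> nat \<Rightarrow> nat set set \<Rightarrow> nat set set" where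
  "cl r n H = \<Inter> {E \<in> K_class r n. H \<subseteq> E}"

end

theory Submission
  imports Defs
begin

lemma K_union:
  assumes E: "E \<in> K_class r n" and fin: "finite F" "F \<noteq> {}"
    and sub: "\<forall>X\<in>F. X \<in> E \<and> T \<subseteq> X" and T: "finite T" "card T = r"
  shows "\<Union>F \<in> E"
  using fin sub
proof (induction F rule: finite_ne_induct)
  case (singleton x) then show ?case by simp
next
  case (insert X F)
  have XE: "X \<in> E" and TX: "T \<subseteq> X" using insert.prems by auto
  have UE: "\<Union>F \<in> E" using insert by auto
  obtain Y where "Y \<in> F" using insert.hyps by auto
  hence TU: "T \<subseteq> \<Union>F" using insert.prems by auto
  have "X \<subseteq> vset n" using E XE unfolding K_class_def is_hypergraph_def by auto
  hence "finite (X \<inter> \<Union>F)" unfolding vset_def by (meson finite_Int finite_atLeastAtMost finite_subset)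
  hence "card (X \<inter> \<Union>F) \<ge> r" using TX TU T card_mono by (metis Int_greatest)
  hence "X \<union> \<Union>F \<in> E" using E XE UE unfolding K_class_def by auto
  thus ?case by simp
qed

definition fam :: "nat set set \<Rightarrow> nat set \<Rightarrow> nat set \<Rightarrow> nat \<Rightarrow> nat set set" where
  "fam H T U x = {B \<in> H. insert x T \<subseteq> B \<and> B \<inter> U = {}}"

definition gen :: "nat set set \<Rightarrow> nat set \<Rightarrow> nat set \<Rightarrow> nat \<Rightarrow> nat set" where
  "gen H T U x = (SOME M. M \<in> fam H T U x \<and> (\<forall>B\<in>fam H T U x. M \<subseteq> B))"

lemma fam_int:
  assumes H: "H \<in> K_class r n" and T: "finite T" "card T = r" and U: "U \<subseteq> vset n" "card U = r"
    and B1: "B1 \<in> fam H T U x" and B2: "B2 \<in> fam H T U x"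
  shows "B1 \<inter> B2 \<in> fam H T U x"
proof -
  have fv: "finite (vset n)" unfolding vset_def by simp
  have h1: "B1 \<in> H" "B2 \<in> H" using B1 B2 unfolding fam_def by auto
  have s1: "B1 \<subseteq> vset n" "B2 \<subseteq> vset n" using h1 H unfolding K_class_def is_hypergraph_def by auto
  have c1: "vset n - B1 \<in> H" "vset n - B2 \<in> H" using h1 H unfolding K_class_def by auto
  have "U \<subseteq> (vset n - B1) \<inter> (vset n - B2)" using U B1 B2 unfolding fam_def by auto
  hence "card ((vset n - B1) \<inter> (vset n - B2)) \<ge> r" using U fv
    by (metis card_mono finite_Diff finite_Int)
  hence "(vset n - B1) \<union> (vset n - B2) \<in> H" using c1 H unfolding K_class_def by auto
  hence "vset n - ((vset n - B1) \<union> (vset n - B2)) \<in> H" using H unfolding K_class_def by auto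
  moreover have "vset n - ((vset n - B1) \<union> (vset n - B2)) = B1 \<inter> B2" using s1 by auto
  ultimately show ?thesis using B1 B2 unfolding fam_def by auto
qed

lemma gen_prop:
  assumes H: "H \<in> K_class r n" and T: "finite T" "card T = r" and U: "U \<subseteq> vset n" "card U = r"
    and ne: "A \<in> fam H T U x"
  shows "gen H T U x \<in> fam H T U x \<and> (\<forall>B\<in>fam H T U x. gen H T U x \<subseteq> B)"
proof -
  have "fam H T U x \<subseteq> Pow (vset n)" using H unfolding fam_def K_class_def is_hypergraph_def by auto
  hence fin: "finite (fam H T U x)" unfolding vset_def by (meson finite_Pow_iff finite_atLeastAtMost finite_subset)
  obtain M where M: "M \<in> fam H T U x" "\<forall>b\<in>fam H T U x. b \<le> M \<longrightarrow> M = b"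
    using finite_has_minimal[OF fin] ne by blast
  have "\<forall>B\<in>fam H T U x. M \<subseteq> B"
  proof
    fix B assume "B \<in> fam H T U x"
    hence "M \<inter> B \<in> fam H T U x" using fam_int[OF H T U M(1)] by blast
    hence "M = M \<inter> B" using M(2) by blast
    thus "M \<subseteq> B" by blast
  qed
  hence "\<exists>M. M \<in> fam H T U x \<and> (\<forall>B\<in>fam H T U x. M \<subseteq> B)" using M by blast
  thus ?thesis unfolding gen_def by (rule someI_ex)
qed

theorem mainTheorem12:
  fixes r :: nat
  shows "\<exists>C::real. C > 0 \<and>
    (\<forall>n::nat. \<forall>H \<in> K_class r n. \<exists>H'. is_hypergraph n H'
        \<and> real (card H') \<le> C * real n ^ (r + 1)
        \<and> H = cl r n H')"
proof (intro exI[of _ "2 * 4 ^ r"] conjI allI ballI)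
  show "(0::real) < 2 * 4 ^ r" by simp
next
  fix n H assume H: "H \<in> K_class r n"
  define I where "I = {1..2*r}"
  define S where "S = {U. U \<subseteq> vset n \<and> card U = r}"
  define Idx0 where "Idx0 = (Pow I \<times> S \<times> vset n) \<union> (S \<times> Pow I \<times> vset n)"
  define Idx where "Idx = Idx0 \<inter> (S \<times> S \<times> UNIV)"
  define H' where "H' = {M. \<exists>T U x. (T, U, x) \<in> Idx \<and> fam H T U x \<noteq> {} \<and> M = gen H T U x}"
  have fv: "finite (vset n)" unfolding vset_def by simp
  have fI: "finite I" unfolding I_def by simp
  have fS: "finite S" unfolding S_def using fv by simp
  have fIdx0: "finite Idx0" unfolding Idx0_def using fI fS fv by simp
  hence fIdx: "finite Idx" unfolding Idx_def by simp
  have Idx_props: "finite T \<and> card T = r \<and> U \<subseteq> vset n \<and> card U = r"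
    if tu: "(T, U, x) \<in> Idx" "fam H T U x \<noteq> {}" for T U x
  proof -
    obtain A where A: "A \<in> fam H T U x" using tu(2) by blast
    have "A \<subseteq> vset n" using A H unfolding fam_def K_class_def is_hypergraph_def by auto
    hence "T \<subseteq> vset n" using A unfolding fam_def by auto
    hence "finite T" using fv finite_subset by blast
    thus ?thesis using tu(1) unfolding Idx_def Idx0_def S_def
      using \<open>T \<subseteq> vset n\<close> by auto
  qed
  have gen_in: "gen H T U x \<in> fam H T U x \<and> (\<forall>B\<in>fam H T U x. gen H T U x \<subseteq> B)"
    if tu: "(T, U, x) \<in> Idx" "fam H T U x \<noteq> {}" for T U x
  proof -
    obtain A where A: "A \<in> fam H T U x" using tu(2) by blast
    have p: "finite T" "card T = r" "U \<subseteq> vset n" "card U = r" using Idx_props[OF tu] by auto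
    show ?thesis using gen_prop[OF H p A] .
  qed
  have H'H: "H' \<subseteq> H"
  proof
    fix M assume "M \<in> H'"
    then obtain T U x where "(T, U, x) \<in> Idx" "fam H T U x \<noteq> {}" "M = gen H T U x"
      unfolding H'_def by blast
    thus "M \<in> H" using gen_in unfolding fam_def by blast
  qed
  have hyp: "is_hypergraph n H'" using H'H H unfolding K_class_def is_hypergraph_def by auto
  have "H' \<subseteq> (\<lambda>(T, U, x). gen H T U x) ` Idx" unfolding H'_def by force
  hence "card H' \<le> card Idx"
    by (meson card_image_le card_mono fIdx finite_imageI le_trans)
  also have "card Idx \<le> card Idx0" unfolding Idx_def using fIdx0 by (simp add: card_mono)
  also have "card Idx0 \<le> card (Pow I \<times> S \<times> vset n) + card (S \<times> Pow I \<times> vset n)"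
    unfolding Idx0_def by (rule card_Un_le)
  also have "\<dots> = 2 * (2 ^ (2*r) * (n choose r) * n)"
    unfolding S_def I_def vset_def
    by (simp add: card_cartesian_product n_subsets card_Pow)
  finally have c1: "card H' \<le> 2 * (2 ^ (2*r) * (n choose r) * n)" .
  have "(n choose r) * n \<le> n ^ (r+1)"
  proof (cases "r \<le> n")
    case True thus ?thesis using binomial_le_pow[OF True] by simp
  next
    case False thus ?thesis by (simp add: binomial_eq_0)
  qed
  hence "card H' \<le> 2 * 4 ^ r * n ^ (r+1)" using c1
    by (smt (verit, ccfv_threshold) mult.assoc mult_le_mono2 order_trans power_mult power2_eq_square numeral_Bit0 numeral_One mult_2)
  hence "real (card H') \<le> real (2 * 4 ^ r * n ^ (r+1))" by linarith
  hence bnd: "real (card H') \<le> 2 * 4 ^ r * real n ^ (r + 1)" by simp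
  have clH: "cl r n H' \<subseteq> H" unfolding cl_def using H H'H by blast
  have Hcl: "H \<subseteq> cl r n H'"
  proof
    fix A assume AH: "A \<in> H"
    have Av: "A \<subseteq> vset n" using AH H unfolding K_class_def is_hypergraph_def by auto
    show "A \<in> cl r n H'" unfolding cl_def
    proof (rule InterI)
      fix E assume "E \<in> {E \<in> K_class r n. H' \<subseteq> E}"
      hence E: "E \<in> K_class r n" and H'E: "H' \<subseteq> E" by auto
      show "A \<in> E"
      proof (cases "card A \<le> r")
        case True thus ?thesis using E Av unfolding K_class_def by auto
      next
        case cA: False
        show ?thesis
        proof (cases "card (vset n - A) \<le> r")
          case True
          hence "vset n - A \<in> E" using E unfolding K_class_def by auto
          hence "vset n - (vset n - A) \<in> E" using E unfolding K_class_def by auto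
          moreover have "vset n - (vset n - A) = A" using Av by auto
          ultimately show ?thesis by simp
        next
          case cB: False
          have "\<exists>T U. (\<forall>x\<in>vset n. (T, U, x) \<in> Idx) \<and> T \<subseteq> A \<and> U \<subseteq> vset n - A
                 \<and> card T = r \<and> card U = r \<and> finite T"
          proof (cases "card (A \<inter> I) \<ge> r")
            case True
            then obtain T where T: "T \<subseteq> A \<inter> I" "card T = r" "finite T" by (meson obtain_subset_with_card_n)
            obtain U where U: "U \<subseteq> vset n - A" "card U = r" using cB
              by (meson nat_le_linear obtain_subset_with_card_n le_trans)
            have "\<forall>x\<in>vset n. (T, U, x) \<in> Idx" unfolding Idx_def Idx0_def S_def using T U Av by auto
            thus ?thesis using T U by blast
          next
            case False
            have "card ((vset n - A) \<inter> I) \<ge> r"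
            proof (cases "2*r \<le> n")
              case True
              hence "I \<subseteq> vset n" unfolding I_def vset_def by auto
              hence "I = (A \<inter> I) \<union> ((vset n - A) \<inter> I)" by auto
              hence "card I \<le> card (A \<inter> I) + card ((vset n - A) \<inter> I)"
                by (metis card_Un_le)
              moreover have "card I = 2*r" unfolding I_def by simp
              ultimately show ?thesis using False by linarith
            next
              case False2: False
              hence "vset n \<subseteq> I" unfolding I_def vset_def by auto
              hence "A \<inter> I = A" using Av by auto
              hence "card (A \<inter> I) = card A" by simp
              thus ?thesis using False cA by linarith
            qed
            then obtain U where U: "U \<subseteq> (vset n - A) \<inter> I" "card U = r" by (meson obtain_subset_with_card_n)
            obtain T where T: "T \<subseteq> A" "card T = r" "finite T" using cA
              by (meson nat_le_linear obtain_subset_with_card_n le_trans)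
            have "T \<subseteq> vset n" using T Av by auto
            hence "\<forall>x\<in>vset n. (T, U, x) \<in> Idx" unfolding Idx_def Idx0_def S_def using T U Av by auto
            thus ?thesis using T U by blast
          qed
          then obtain T U where TU: "\<forall>x\<in>vset n. (T, U, x) \<in> Idx" "T \<subseteq> A" "U \<subseteq> vset n - A"
                 "card T = r" "card U = r" "finite T" by blast
          define F where "F = (\<lambda>x. gen H T U x) ` A"
          have memA: "A \<in> fam H T U x" if "x \<in> A" for x
            using that AH TU unfolding fam_def by auto
          have gx: "gen H T U x \<in> fam H T U x \<and> (\<forall>B\<in>fam H T U x. gen H T U x \<subseteq> B)"
            if "x \<in> A" for x
            using gen_in[OF TU(1)[rule_format] ] memA[OF that] that Av by blast
          have "A = \<Union>F"
          proof
            show "A \<subseteq> \<Union>F" unfolding F_def using gx unfolding fam_def by blast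
            show "\<Union>F \<subseteq> A" unfolding F_def using gx memA by blast
          qed
          moreover have "\<Union>F \<in> E"
          proof (rule K_union[OF E _ _ _ TU(6) TU(4)])
            have "finite A" using Av fv finite_subset by blast
            thus "finite F" unfolding F_def by simp
            have "A \<noteq> {}" using cA by auto
            thus "F \<noteq> {}" unfolding F_def by simp
            show "\<forall>X\<in>F. X \<in> E \<and> T \<subseteq> X"
            proof
              fix X assume "X \<in> F"
              then obtain x where x: "x \<in> A" "X = gen H T U x" unfolding F_def by blast
              have "X \<in> H'" unfolding H'_def using x TU(1) memA Av by blast
              thus "X \<in> E \<and> T \<subseteq> X" using H'E gx x unfolding fam_def by blast
            qed
          qed
          ultimately show ?thesis by simp
        qed
      qed
    qed
  qed
  show "\<exists>H'. is_hypergraph n H' \<and> real (card H') \<le> 2 * 4 ^ r * real n ^ (r + 1) \<and> H = cl r n H'"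
    using hyp bnd clH Hcl by blast
qed

end
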